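(* Let $R$ be a commutative local ring and $s\in R$. Then every upper triangular element $\left[\begin{smallmatrix} a&b\\ 0&c\end{smallmatrix}\right]$ ($a,b,c\in R$) of $M_2(R;s)$ is strongly clean in $M_2(R;s)$.
   Context: A commutative ring $R$ is local if it has a unique maximal ideal. For a commutative ring $R$ and $s\in R$, $M_2(R;s)$ denotes the ring whose elements are the $2\times 2$ arrays $\left[\begin{smallmatrix} a&b\\ c&d\end{smallmatrix}\right]$ with $a,b,c,d\in R$, with componentwise addition and multiplication $\left[\begin{smallmatrix} a&b\\ c&d\end{smallmatrix}\right]\left[\begin{smallmatrix} a'&b'\\ c'&d'\end{smallmatrix}\right]=\left[\begin{smallmatrix} aa'+s^2bc'&ab'+bd'\\ ca'+dc'&s^2cb'+dd'\end{smallmatrix}\right]$. An element $a$ of a ring $T$ is strongly clean if there is an idempotent $e\in T$ with $ae=ea$ and $a-e$ a unit of $T$. *)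

theory Defs
  imports Main
begin

definition is_ideal :: "'a::comm_ring_1 set \<Rightarrow> bool" where
  "is_ideal I \<longleftrightarrow> 0 \<in> I \<and> (\<forall>x\<in>I. \<forall>y\<in>I. x + y \<in> I) \<and> (\<forall>r. \<forall>x\<in>I. r * x \<in> I)"

definition is_maximal_ideal :: "'a::comm_ring_1 set \<Rightarrow> bool" where
  "is_maximal_ideal M \<longleftrightarrow> is_ideal M \<and> M \<noteq> UNIV \<and>
     (\<forall>J. is_ideal J \<and> M \<subseteq> J \<longrightarrow> J = M \<or> J = UNIV)"

definition local_ring :: "'a::comm_ring_1 itself \<Rightarrow> bool" where
  "local_ring _ \<longleftrightarrow> (\<exists>!M::'a set. is_maximal_ideal M)"

text \<open>The ring M_2(R;s): an element [a b; c d] is the tuple (a,b,c,d).\<close>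

type_synonym 'a m2 = "'a \<times> 'a \<times> 'a \<times> 'a"

definition m2_mult :: "'a::comm_ring_1 \<Rightarrow> 'a m2 \<Rightarrow> 'a m2 \<Rightarrow> 'a m2" where
  "m2_mult s X Y = (case X of (a, b, c, d) \<Rightarrow> case Y of (a', b', c', d') \<Rightarrow>
     (a*a' + s^2*b*c', a*b' + b*d', c*a' + d*c', s^2*c*b' + d*d'))"

definition m2_add :: "'a::comm_ring_1 m2 \<Rightarrow> 'a m2 \<Rightarrow> 'a m2" where
  "m2_add X Y = (case X of (a, b, c, d) \<Rightarrow> case Y of (a', b', c', d') \<Rightarrow>
     (a + a', b + b', c + c', d + d'))"

definition m2_sub :: "'a::comm_ring_1 m2 \<Rightarrow> 'a m2 \<Rightarrow> 'a m2" where
  "m2_sub X Y = (case X of (a, b, c, d) \<Rightarrow> case Y of (a', b', c', d') \<Rightarrow>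
     (a - a', b - b', c - c', d - d'))"

definition m2_one :: "'a::comm_ring_1 m2" where
  "m2_one = (1, 0, 0, 1)"

definition m2_unit :: "'a::comm_ring_1 \<Rightarrow> 'a m2 \<Rightarrow> bool" where
  "m2_unit s X \<longleftrightarrow> (\<exists>Y. m2_mult s X Y = m2_one \<and> m2_mult s Y X = m2_one)"

definition m2_idempotent :: "'a::comm_ring_1 \<Rightarrow> 'a m2 \<Rightarrow> bool" where
  "m2_idempotent s E \<longleftrightarrow> m2_mult s E E = E"

definition m2_strongly_clean :: "'a::comm_ring_1 \<Rightarrow> 'a m2 \<Rightarrow> bool" where
  "m2_strongly_clean s A \<longleftrightarrow> (\<exists>E. m2_idempotent s E \<and> m2_mult s A E = m2_mult s E A
      \<and> m2_unit s (m2_sub A E))"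

end

theory Submission
  imports Defs
begin

lemma exists_max_ideal:
  fixes I :: "'a::comm_ring_1 set"
  assumes I: "is_ideal I" and n1: "1 \<notin> I"
  shows "\<exists>M. is_maximal_ideal M \<and> I \<subseteq> M"
proof -
  let ?A = "{J. is_ideal J \<and> 1 \<notin> J \<and> I \<subseteq> J}"
  have "\<exists>M\<in>?A. \<forall>X\<in>?A. M \<subseteq> X \<longrightarrow> X = M"
  proof (rule subset_Zorn_nonempty)
    show "?A \<noteq> {}" using I n1 by auto
  next
    fix C assume ne: "C \<noteq> {}" and ch: "subset.chain ?A C"
    hence sub: "C \<subseteq> ?A" and cmp: "\<forall>X\<in>C. \<forall>Y\<in>C. X \<subseteq> Y \<or> Y \<subseteq> X"
      by (auto simp: subset_chain_def)
    have "is_ideal (\<Union>C)"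
      unfolding is_ideal_def
    proof (intro conjI ballI allI)
      show "0 \<in> \<Union>C" using ne sub by (auto simp: is_ideal_def)
    next
      fix x y assume "x \<in> \<Union>C" "y \<in> \<Union>C"
      then obtain X Y where X: "X \<in> C" "x \<in> X" and Y: "Y \<in> C" "y \<in> Y" by auto
      show "x + y \<in> \<Union>C"
      proof (cases "X \<subseteq> Y")
        case True
        have "is_ideal Y" using sub Y by auto
        hence "x + y \<in> Y" using True X Y unfolding is_ideal_def by blast
        then show ?thesis using Y by blast
      next
        case False
        hence "Y \<subseteq> X" using cmp X Y by blast
        have "is_ideal X" using sub X by auto
        hence "x + y \<in> X" using \<open>Y \<subseteq> X\<close> X Y unfolding is_ideal_def by blast
        then show ?thesis using X by blast
      qed
    next
      fix r x assume "x \<in> \<Union>C"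
      then obtain X where X: "X \<in> C" "x \<in> X" by auto
      have "is_ideal X" using sub X by auto
      hence "r * x \<in> X" using X unfolding is_ideal_def by blast
      then show "r * x \<in> \<Union>C" using X by blast
    qed
    moreover have "1 \<notin> \<Union>C" using sub by auto
    moreover have "I \<subseteq> \<Union>C" using ne sub by auto
    ultimately show "\<Union>C \<in> ?A" by auto
  qed
  then obtain M where M: "M \<in> ?A" and mx: "\<forall>X\<in>?A. M \<subseteq> X \<longrightarrow> X = M" by blast
  have "is_maximal_ideal M"
    unfolding is_maximal_ideal_def
  proof (intro conjI allI impI)
    show "is_ideal M" using M by auto
    show "M \<noteq> UNIV" using M by auto
  next
    fix J assume J: "is_ideal J \<and> M \<subseteq> J"
    show "J = M \<or> J = UNIV"
    proof (cases "1 \<in> J")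
      case True
      have "J = UNIV"
      proof
        show "UNIV \<subseteq> J"
        proof
          fix r :: 'a
          have "is_ideal J" using J by blast
          hence "r * 1 \<in> J" using True unfolding is_ideal_def by blast
          thus "r \<in> J" by simp
        qed
      qed simp
      thus ?thesis ..
    next
      case False
      thus ?thesis using J M mx by auto
    qed
  qed
  thus ?thesis using M by auto
qed

lemma principal_ideal: "is_ideal (range (\<lambda>r. r * (x::'a::comm_ring_1)))"
  unfolding is_ideal_def
proof (intro conjI ballI allI)
  show "0 \<in> range (\<lambda>r. r * x)" by (rule range_eqI[of _ _ 0]) simp
next
  fix u v assume "u \<in> range (\<lambda>r. r * x)" "v \<in> range (\<lambda>r. r * x)"
  then obtain p q where "u = p * x" "v = q * x" by blast
  hence "u + v = (p + q) * x" by (simp add: distrib_right)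
  thus "u + v \<in> range (\<lambda>r. r * x)" by blast
next
  fix r u assume "u \<in> range (\<lambda>r. r * x)"
  then obtain p where "u = p * x" by blast
  hence "r * u = (r * p) * x" by (simp add: mult.assoc)
  thus "r * u \<in> range (\<lambda>r. r * x)" by blast
qed

lemma local_unit:
  fixes x :: "'a::comm_ring_1"
  assumes "local_ring TYPE('a)"
  shows "x dvd 1 \<or> (1 - x) dvd 1"
proof (rule ccontr)
  assume "\<not> ?thesis"
  hence nx: "\<not> x dvd 1" and ny: "\<not> (1 - x) dvd 1" by auto
  have "1 \<notin> range (\<lambda>r. r * x)"
  proof
    assume "1 \<in> range (\<lambda>r. r * x)"
    then obtain r where "1 = r * x" by blast
    hence "x dvd 1" by (metis dvd_triv_right)
    thus False using nx by simp
  qed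
  then obtain M1 where M1: "is_maximal_ideal M1" "range (\<lambda>r. r * x) \<subseteq> M1"
    using exists_max_ideal[OF principal_ideal] by blast
  have "1 \<notin> range (\<lambda>r. r * (1 - x))"
  proof
    assume "1 \<in> range (\<lambda>r. r * (1 - x))"
    then obtain r where "1 = r * (1 - x)" by blast
    hence "(1 - x) dvd 1" by (metis dvd_triv_right)
    thus False using ny by simp
  qed
  then obtain M2 where M2: "is_maximal_ideal M2" "range (\<lambda>r. r * (1 - x)) \<subseteq> M2"
    using exists_max_ideal[OF principal_ideal] by blast
  have "\<exists>!M::'a set. is_maximal_ideal M" using assms unfolding local_ring_def .
  hence "M1 = M2" using M1(1) M2(1) by (metis Ex1_def)
  have "x \<in> range (\<lambda>r. r * x)" by (rule range_eqI[of _ _ 1]) simp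
  hence xM: "x \<in> M1" using M1(2) by blast
  have "1 - x \<in> range (\<lambda>r. r * (1 - x))" by (rule range_eqI[of _ _ 1]) simp
  hence "1 - x \<in> M1" using M2(2) \<open>M1 = M2\<close> by blast
  have "is_ideal M1" using M1(1) unfolding is_maximal_ideal_def by blast
  hence "x + (1 - x) \<in> M1" using xM \<open>1 - x \<in> M1\<close> unfolding is_ideal_def by blast
  hence one: "1 \<in> M1" by simp
  have "M1 = UNIV"
  proof
    show "UNIV \<subseteq> M1"
    proof
      fix r :: 'a
      have "is_ideal M1" using M1(1) unfolding is_maximal_ideal_def by blast
      hence "r * 1 \<in> M1" using one unfolding is_ideal_def by blast
      thus "r \<in> M1" by simp
    qed
  qed simp
  thus False using M1(1) by (auto simp: is_maximal_ideal_def)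
qed

lemma nonunit_add:
  fixes x y :: "'a::comm_ring_1"
  assumes "local_ring TYPE('a)" "\<not> x dvd 1" "\<not> y dvd 1"
  shows "\<not> (x + y) dvd 1"
proof
  assume "(x + y) dvd 1"
  then obtain u where u: "(x + y) * u = 1" by (metis dvdE)
  have "\<not> (x * u) dvd 1" using assms(2) by (meson dvd_mult_left)
  hence "(1 - x * u) dvd 1" using local_unit[OF assms(1)] by blast
  moreover have "1 - x * u = y * u" using u by (simp add: algebra_simps)
  ultimately have "(y * u) dvd 1" by simp
  hence "y dvd 1" by (meson dvd_mult_left)
  thus False using assms(3) by simp
qed

lemma flip_unit:
  fixes x :: "'a::comm_ring_1"
  assumes "(1 - x) dvd 1" shows "(x - 1) dvd 1"
proof -
  have "x - 1 = - (1 - x)" by simp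
  thus ?thesis using assms by (simp only: minus_dvd_iff)
qed

lemma ut_unit:
  fixes p q r s :: "'a::comm_ring_1"
  assumes "p dvd 1" "r dvd 1"
  shows "m2_unit s (p, q, 0, r)"
proof -
  obtain p' where p: "p * p' = 1" using assms(1) by (metis dvdE)
  obtain r' where r: "r * r' = 1" using assms(2) by (metis dvdE)
  have e1: "p * (- (p' * q * r')) + q * r' = 0"
  proof -
    have "p * (- (p' * q * r')) = - ((p * p') * q * r')" by (simp add: algebra_simps)
    thus ?thesis using p by simp
  qed
  have e2: "p' * q + (- (p' * q * r')) * r = 0"
  proof -
    have "(- (p' * q * r')) * r = - (p' * q * (r * r'))" by (simp add: algebra_simps)
    thus ?thesis using r by simp
  qed
  have "m2_mult s (p, q, 0, r) (p', - (p' * q * r'), 0, r') = m2_one"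
    using p r e1 e2 by (simp add: m2_mult_def m2_one_def)
  moreover have "m2_mult s (p', - (p' * q * r'), 0, r') (p, q, 0, r) = m2_one"
    using p r e1 e2 by (simp add: m2_mult_def m2_one_def mult.commute)
  ultimately show ?thesis unfolding m2_unit_def by blast
qed

theorem lemma3p5:
  fixes s a b c :: "'a::comm_ring_1"
  assumes "local_ring TYPE('a)"
  shows "m2_strongly_clean s (a, b, 0, c)"
proof -
  note L = local_unit[OF assms] and N = nonunit_add[OF assms]
  have neg: "\<And>x::'a. \<not> x dvd 1 \<Longrightarrow> \<not> (- x) dvd 1" by simp
  show ?thesis
  proof (cases "a dvd 1")
    case ua: True
    show ?thesis
    proof (cases "c dvd 1")
      case True
      have "m2_unit s (m2_sub (a, b, 0, c) (0,0,0,0))"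
        using ut_unit[OF ua True] by (simp add: m2_sub_def)
      thus ?thesis unfolding m2_strongly_clean_def m2_idempotent_def
        by (intro exI[of _ "(0,0,0,0)"]) (simp add: m2_mult_def)
    next
      case nc: False
      have "(c - a) dvd 1"
      proof (rule ccontr)
        assume "\<not> (c - a) dvd 1"
        hence "\<not> (c + - (c - a)) dvd 1" using N[OF nc] neg by blast
        thus False using ua by simp
      qed
      then obtain k where k: "(c - a) * k = 1" by (metis dvdE)
      have c1: "(1 - c) dvd 1" using L nc by blast
      hence c1': "(c - 1) dvd 1" by (rule flip_unit)
      define x where "x = b * k"
      have comm: "a * x + b = x * c"
      proof -
        have "x * c - a * x = b * ((c - a) * k)" by (simp add: x_def algebra_simps)
        hence "x * c - a * x = b" using k by simp
        hence "x * c = b + a * x" by (simp only: diff_eq_eq)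
        thus ?thesis by (simp add: add.commute)
      qed
      have "m2_unit s (m2_sub (a, b, 0, c) (0,x,0,1))"
        using ut_unit[OF ua c1'] by (simp add: m2_sub_def)
      thus ?thesis unfolding m2_strongly_clean_def m2_idempotent_def
        using comm by (intro exI[of _ "(0,x,0,1)"]) (simp add: m2_mult_def)
    qed
  next
    case na: False
    have a1': "(a - 1) dvd 1" using L na flip_unit by blast
    show ?thesis
    proof (cases "c dvd 1")
      case uc: True
      have "(a - c) dvd 1"
      proof (rule ccontr)
        assume "\<not> (a - c) dvd 1"
        hence "\<not> (a + - (a - c)) dvd 1" using N[OF na] neg by blast
        thus False using uc by simp
      qed
      then obtain k where k: "(a - c) * k = 1" by (metis dvdE)
      define y where "y = b * k"
      have comm: "a * y = b + y * c"
      proof -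
        have "a * y - y * c = b * ((a - c) * k)" by (simp add: y_def algebra_simps)
        hence "a * y - y * c = b" using k by simp
        thus ?thesis by (simp only: diff_eq_eq)
      qed
      have "m2_unit s (m2_sub (a, b, 0, c) (1,y,0,0))"
        using ut_unit[OF a1' uc] by (simp add: m2_sub_def)
      thus ?thesis unfolding m2_strongly_clean_def m2_idempotent_def
        using comm by (intro exI[of _ "(1,y,0,0)"]) (simp add: m2_mult_def)
    next
      case nc: False
      have c1': "(c - 1) dvd 1" using L nc flip_unit by blast
      have "m2_unit s (m2_sub (a, b, 0, c) (1,0,0,1))"
        using ut_unit[OF a1' c1'] by (simp add: m2_sub_def)
      thus ?thesis unfolding m2_strongly_clean_def m2_idempotent_def
        by (intro exI[of _ "(1,0,0,1)"]) (simp add: m2_mult_def)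
    qed
  qed
qed

end
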